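(* Let $G_d=(\mathcal{N},\mathcal{E}_d)$ be a directed acyclic graph with agents indexed in topological order, and let $\{\pi^k\}$ be the sequence of deterministic joint policies generated by Action-Dependent Multi-Agent Policy Iteration associated with $G_d$, under the Singleton Argmax Assumption. Let $V^{\circ}=\lim_{k\to\infty}V^{\pi^k}$ and let $G_c=(\mathcal{N},\mathcal{E}_c)$ be a coordination graph of the function $Q^{V^{\circ}}(s,a)=r(s,a)+\gamma\sum_{s'}P(s'|s,a)V^{\circ}(s')$. If $N_d(i)=N_c(i^{[+]})$ for all $i\in\mathcal{N}$, then there exists $K$ with $\pi^k=\pi^K$ for all $k\ge K$, and $\pi^K$ is globally optimal ($V^{\pi^K}=V^*$).
   Context: Markov game $\langle \mathcal{N},\mathcal{S},\mathcal{A},P,r,\gamma\rangle$: agents $\mathcal{N}=\{1,\dots,n\}$, finite state space $\mathcal{S}$, finite action spaces $\mathcal{A}_i$, $\mathcal{A}=\prod_i\mathcal{A}_i$, transition kernel $P$, reward $r$, discount $\gamma\in[0,1)$; $V^\pi$, $Q^\pi$ are the usual discounted value functions and $V^*$ the optimal value function. (The limit $V^\circ$ exists: the sequence $V^{\pi^k}$ is eventually constant.) Notation: $a_S=(a_j)_{j\in S}$, $\mathcal{A}_S=\prod_{j\in S}\mathcal{A}_j$, $-S=\mathcal{N}\setminus S$, $i^{[+]}=\{i,\dots,n\}$. Coordination graph: undirected $G_c=(\mathcal{N},\mathcal{E}_c)$ is a CG of $Q:\mathcal{S}\times\mathcal{A}\to\mathbb{R}$ if $Q(s,a)=\sum_iQ_i(s,a_i)+\sum_{(i,j)\in\mathcal{E}_c}Q_{ij}(s,a_i,a_j)$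 for some functions $Q_i,Q_{ij}$. $N_c(S)=(\bigcup_{i\in S}N_c(i))\setminus S$ where $N_c(i)$ are the neighbors of $i$. ADG: directed acyclic $G_d$, $N_d(i)=\{j:(j,i)\in\mathcal{E}_d\}$, $N_d[i]=N_d(i)\cup\{i\}$, $j<i$ for $j\in N_d(i)$. A deterministic policy associated with $G_d$ consists of maps $\pi_i:\mathcal{S}\times\mathcal{A}_{N_d(i)}\to\mathcal{A}_i$, executed in index order. For fixed $a_{N_d[i]}$, $\pi_{-N_d[i]}(s,a_{N_d[i]})$ denotes the actions of agents outside $N_d[i]$ obtained by executing their policies in index order with $a_{N_d[i]}$ held fixed. Action-Dependent Multi-Agent Policy Iteration: initialize deterministic $\pi^0$ associated with $G_d$; for $k=0,1,\dots$ compute $Q^{\pi^k}$, then for $i=1,\dots,n$, with $\pi^{k,i}=(\pi^{k+1}_1,\dots,\pi^{k+1}_{i-1},\pi^k_i,\dots,\pi^k_n)$, set for all $s,a_{N_d(i)}$: $\pi^{k+1}_i(s,a_{N_d(i)})\in\arg\max_{a_i}Q^{\pi^k}(s,a_{N_d[i]},\pi^{k,i}_{-N_d[i]}(s,a_{N_d[i]}))$. Singleton Argmax Assumption: each such argmax set is a singleton for all $k\ge1$, $i$, $s$, $a_{N_d(i)}$. *)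

theory Defs
  imports "HOL-Analysis.Analysis"
begin

text \<open>Agents are 0,...,n-1 (index order = topological order of the ADG).
 Per-agent action sets A i :: 'a set; joint actions are extensional functions
 in PiE {..<n} A. States form a finite type 's.\<close>

definition jactions :: "nat \<Rightarrow> (nat \<Rightarrow> 'a set) \<Rightarrow> (nat \<Rightarrow> 'a) set" where
  "jactions n A = PiE {..<n} A"

fun stepdist :: "('s::finite \<Rightarrow> (nat \<Rightarrow> 'a) \<Rightarrow> 's \<Rightarrow> real) \<Rightarrow> ('s \<Rightarrow> (nat \<Rightarrow> 'a))
                 \<Rightarrow> nat \<Rightarrow> 's \<Rightarrow> 's \<Rightarrow> real" where
  "stepdist P mu 0 s s' = (if s' = s then 1 else 0)"
| "stepdist P mu (Suc t) s s' = (\<Sum>u\<in>UNIV. stepdist P mu t s u * P u (mu u) s')"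

definition Vpi :: "('s::finite \<Rightarrow> (nat \<Rightarrow> 'a) \<Rightarrow> 's \<Rightarrow> real) \<Rightarrow> ('s \<Rightarrow> (nat \<Rightarrow> 'a) \<Rightarrow> real)
                   \<Rightarrow> real \<Rightarrow> ('s \<Rightarrow> (nat \<Rightarrow> 'a)) \<Rightarrow> 's \<Rightarrow> real" where
  "Vpi P r \<gamma> mu s = (\<Sum>t. \<gamma> ^ t * (\<Sum>u\<in>UNIV. stepdist P mu t s u * r u (mu u)))"

definition QV :: "('s::finite \<Rightarrow> (nat \<Rightarrow> 'a) \<Rightarrow> 's \<Rightarrow> real) \<Rightarrow> ('s \<Rightarrow> (nat \<Rightarrow> 'a) \<Rightarrow> real)
                  \<Rightarrow> real \<Rightarrow> ('s \<Rightarrow> real) \<Rightarrow> 's \<Rightarrow> (nat \<Rightarrow> 'a) \<Rightarrow> real" where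
  "QV P r \<gamma> V s a = r s a + \<gamma> * (\<Sum>s'\<in>UNIV. P s a s' * V s')"

definition Vstar :: "nat \<Rightarrow> (nat \<Rightarrow> 'a set) \<Rightarrow> ('s::finite \<Rightarrow> (nat \<Rightarrow> 'a) \<Rightarrow> 's \<Rightarrow> real)
                     \<Rightarrow> ('s \<Rightarrow> (nat \<Rightarrow> 'a) \<Rightarrow> real) \<Rightarrow> real \<Rightarrow> 's \<Rightarrow> real" where
  "Vstar n A P r \<gamma> s = (SUP mu\<in>{mu. \<forall>s. mu s \<in> jactions n A}. Vpi P r \<gamma> mu s)"

text \<open>A policy profile p :: nat => 's => (nat => 'a) => 'a, where p i s b with
 b in PiE (Nd i) A is pi_i(s, a_{N_d(i)}).\<close>
fun exec_pre :: "(nat \<Rightarrow> nat set) \<Rightarrow> (nat \<Rightarrow> 's \<Rightarrow> (nat \<Rightarrow> 'a) \<Rightarrow> 'a) \<Rightarrow> nat set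
                 \<Rightarrow> (nat \<Rightarrow> 'a) \<Rightarrow> 's \<Rightarrow> nat \<Rightarrow> (nat \<Rightarrow> 'a)" where
  "exec_pre Nd p F a s 0 = (\<lambda>_. undefined)"
| "exec_pre Nd p F a s (Suc i) =
     (let c = exec_pre Nd p F a s i
      in c(i := (if i \<in> F then a i else p i s (restrict c (Nd i)))))"

definition exec :: "(nat \<Rightarrow> nat set) \<Rightarrow> nat \<Rightarrow> (nat \<Rightarrow> 's \<Rightarrow> (nat \<Rightarrow> 'a) \<Rightarrow> 'a) \<Rightarrow> nat set
                 \<Rightarrow> (nat \<Rightarrow> 'a) \<Rightarrow> 's \<Rightarrow> (nat \<Rightarrow> 'a)" where
  "exec Nd n p F a s = exec_pre Nd p F a s n"

definition jpol :: "(nat \<Rightarrow> nat set) \<Rightarrow> nat \<Rightarrow> (nat \<Rightarrow> 's \<Rightarrow> (nat \<Rightarrow> 'a) \<Rightarrow> 'a) \<Rightarrow> 's \<Rightarrow> (nat \<Rightarrow> 'a)" where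
  "jpol Nd n p s = exec Nd n p {} (\<lambda>_. undefined) s"

definition mixpol :: "(nat \<Rightarrow> 's \<Rightarrow> (nat \<Rightarrow> 'a) \<Rightarrow> 'a) \<Rightarrow> (nat \<Rightarrow> 's \<Rightarrow> (nat \<Rightarrow> 'a) \<Rightarrow> 'a) \<Rightarrow> nat
                   \<Rightarrow> (nat \<Rightarrow> 's \<Rightarrow> (nat \<Rightarrow> 'a) \<Rightarrow> 'a)" where
  "mixpol pold pnew i = (\<lambda>j. if j < i then pnew j else pold j)"

definition argmax_set :: "'a set \<Rightarrow> ('a \<Rightarrow> real) \<Rightarrow> 'a set" where
  "argmax_set S f = {x \<in> S. \<forall>y\<in>S. f y \<le> f x}"

text \<open>Objective maximised by agent i at iteration k:
 x |-> Q^{pi^k}(s, a_{N_d[i]}, pi^{k,i}_{-N_d[i]}(s, a_{N_d[i]})) with a_{N_d(i)} = b, a_i = x.\<close>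
definition admapi_obj :: "nat \<Rightarrow> (nat \<Rightarrow> nat set) \<Rightarrow> ('s::finite \<Rightarrow> (nat \<Rightarrow> 'a) \<Rightarrow> 's \<Rightarrow> real)
     \<Rightarrow> ('s \<Rightarrow> (nat \<Rightarrow> 'a) \<Rightarrow> real) \<Rightarrow> real \<Rightarrow> (nat \<Rightarrow> nat \<Rightarrow> 's \<Rightarrow> (nat \<Rightarrow> 'a) \<Rightarrow> 'a)
     \<Rightarrow> nat \<Rightarrow> nat \<Rightarrow> 's \<Rightarrow> (nat \<Rightarrow> 'a) \<Rightarrow> 'a \<Rightarrow> real" where
  "admapi_obj n Nd P r \<gamma> pol k i s b x =
     QV P r \<gamma> (Vpi P r \<gamma> (jpol Nd n (pol k))) s
        (exec Nd n (mixpol (pol k) (pol (Suc k)) i) (insert i (Nd i)) (b(i := x)) s)"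

definition is_admapi :: "nat \<Rightarrow> (nat \<Rightarrow> 'a set) \<Rightarrow> (nat \<Rightarrow> nat set)
     \<Rightarrow> ('s::finite \<Rightarrow> (nat \<Rightarrow> 'a) \<Rightarrow> 's \<Rightarrow> real) \<Rightarrow> ('s \<Rightarrow> (nat \<Rightarrow> 'a) \<Rightarrow> real) \<Rightarrow> real
     \<Rightarrow> (nat \<Rightarrow> nat \<Rightarrow> 's \<Rightarrow> (nat \<Rightarrow> 'a) \<Rightarrow> 'a) \<Rightarrow> bool" where
  "is_admapi n A Nd P r \<gamma> pol \<longleftrightarrow>
     (\<forall>i<n. \<forall>s. \<forall>b\<in>PiE (Nd i) A. pol 0 i s b \<in> A i) \<and>
     (\<forall>k. \<forall>i<n. \<forall>s. \<forall>b\<in>PiE (Nd i) A.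
        pol (Suc k) i s b \<in> argmax_set (A i) (admapi_obj n Nd P r \<gamma> pol k i s b))"

definition singleton_argmax :: "nat \<Rightarrow> (nat \<Rightarrow> 'a set) \<Rightarrow> (nat \<Rightarrow> nat set)
     \<Rightarrow> ('s::finite \<Rightarrow> (nat \<Rightarrow> 'a) \<Rightarrow> 's \<Rightarrow> real) \<Rightarrow> ('s \<Rightarrow> (nat \<Rightarrow> 'a) \<Rightarrow> real) \<Rightarrow> real
     \<Rightarrow> (nat \<Rightarrow> nat \<Rightarrow> 's \<Rightarrow> (nat \<Rightarrow> 'a) \<Rightarrow> 'a) \<Rightarrow> bool" where
  "singleton_argmax n A Nd P r \<gamma> pol \<longleftrightarrow>
     (\<forall>k\<ge>1. \<forall>i<n. \<forall>s. \<forall>b\<in>PiE (Nd i) A.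
        \<exists>x. argmax_set (A i) (admapi_obj n Nd P r \<gamma> pol k i s b) = {x})"

definition undirected_graph :: "nat \<Rightarrow> (nat \<times> nat) set \<Rightarrow> bool" where
  "undirected_graph n Ec \<longleftrightarrow> Ec \<subseteq> {..<n} \<times> {..<n} \<and> sym Ec \<and> irrefl Ec"

text \<open>Ec is a coordination graph of Qf: each undirected edge {i,j} counted once (i < j).\<close>
definition is_CG :: "nat \<Rightarrow> (nat \<Rightarrow> 'a set) \<Rightarrow> (nat \<times> nat) set \<Rightarrow> ('s \<Rightarrow> (nat \<Rightarrow> 'a) \<Rightarrow> real) \<Rightarrow> bool" where
  "is_CG n A Ec Qf \<longleftrightarrow> undirected_graph n Ec \<and>
     (\<exists>Q1 :: nat \<Rightarrow> 's \<Rightarrow> 'a \<Rightarrow> real. \<exists>Q2 :: nat \<Rightarrow> nat \<Rightarrow> 's \<Rightarrow> 'a \<Rightarrow> 'a \<Rightarrow> real.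
        \<forall>s. \<forall>a\<in>jactions n A.
          Qf s a = (\<Sum>i<n. Q1 i s (a i)) + (\<Sum>(i, j)\<in>{e\<in>Ec. fst e < snd e}. Q2 i j s (a i) (a j)))"

definition Nc :: "(nat \<times> nat) set \<Rightarrow> nat \<Rightarrow> nat set" where
  "Nc Ec i = {j. (i, j) \<in> Ec}"

definition NcS :: "(nat \<times> nat) set \<Rightarrow> nat set \<Rightarrow> nat set" where
  "NcS Ec S = (\<Union>i\<in>S. Nc Ec i) - S"

end

theory Submission
  imports Defs
begin


lemma exec_pre_out: "m \<le> j \<Longrightarrow> exec_pre Nd p F a s m j = undefined"
  by (induction m) (auto simp: Let_def)

lemma exec_pre_stable: "j < m \<Longrightarrow> exec_pre Nd p F a s m j = exec_pre Nd p F a s (Suc j) j"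
proof (induction m)
  case 0 then show ?case by simp
next
  case (Suc m)
  show ?case
  proof (cases "j = m")
    case True then show ?thesis by simp
  next
    case False then have "j < m" using Suc by simp
    then show ?thesis using Suc False by (simp add: Let_def)
  qed
qed

lemma exec_pre_fixed: "j < m \<Longrightarrow> j \<in> F \<Longrightarrow> exec_pre Nd p F a s m j = a j"
  by (subst exec_pre_stable) (auto simp: Let_def)

lemma exec_pre_free:
  assumes "j < m" "j \<notin> F" "Nd j \<subseteq> {..<j}"
  shows "exec_pre Nd p F a s m j = p j s (restrict (exec_pre Nd p F a s m) (Nd j))"
proof -
  have "restrict (exec_pre Nd p F a s j) (Nd j) = restrict (exec_pre Nd p F a s m) (Nd j)"
  proof
    fix l show "restrict (exec_pre Nd p F a s j) (Nd j) l = restrict (exec_pre Nd p F a s m) (Nd j) l"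
      using assms exec_pre_stable[of l j Nd p F a s] exec_pre_stable[of l m Nd p F a s] by auto
  qed
  then show ?thesis using assms by (subst exec_pre_stable) (auto simp: Let_def)
qed

lemma exec_pre_empty: "exec_pre Nd p {} a s m = exec_pre Nd p {} a' s m"
  by (induction m) (auto simp: Let_def)

lemma exec_pre_cong: "(\<forall>j<m. p j = p' j) \<Longrightarrow> exec_pre Nd p F a s m = exec_pre Nd p' F a s m"
  by (induction m) (auto simp: Let_def)

lemma exec_pre_typed:
  assumes dag: "\<forall>j<m. Nd j \<subseteq> {..<j}"
    and fx: "\<forall>j<m. j \<in> F \<longrightarrow> a j \<in> A j"
    and fr: "\<forall>j<m. j \<notin> F \<longrightarrow> (\<forall>d\<in>PiE (Nd j) A. p j s d \<in> A j)"
  shows "exec_pre Nd p F a s m \<in> PiE {..<m} A"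
proof -
  have "\<forall>j<m. exec_pre Nd p F a s m j \<in> A j"
  proof (intro allI impI)
    fix j assume "j < m" then show "exec_pre Nd p F a s m j \<in> A j"
    proof (induction j rule: less_induct)
      case (less j)
      show ?case
      proof (cases "j \<in> F")
        case True then show ?thesis using less fx exec_pre_fixed by metis
      next
        case False
        have nd: "Nd j \<subseteq> {..<j}" using dag less by auto
        have "restrict (exec_pre Nd p F a s m) (Nd j) \<in> PiE (Nd j) A"
          unfolding restrict_PiE_iff using less nd by auto
        then show ?thesis using exec_pre_free[of j m F Nd p a s] less(2) False nd fr by auto
      qed
    qed
  qed
  then show ?thesis using exec_pre_out[of m _ Nd p F a s] by (auto simp: PiE_def extensional_def)
qed

lemma exec_loc:
  assumes dag: "\<forall>j<m. Nd j \<subseteq> {..<j}"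
    and R: "R \<subseteq> {..<m}"
    and tp: "\<forall>j\<in>R. exec_pre Nd p F a s m j \<in> A j"
    and H: "\<forall>j\<in>R. (j \<in> F \<and> j \<in> F' \<and> a j = a' j)
              \<or> (j \<notin> F \<and> j \<notin> F' \<and> Nd j \<subseteq> R \<and> (\<forall>d\<in>PiE (Nd j) A. p j s d = p' j s d))
              \<or> exec_pre Nd p F a s m j = exec_pre Nd p' F' a' s m j"
  shows "\<forall>j\<in>R. exec_pre Nd p F a s m j = exec_pre Nd p' F' a' s m j"
proof
  fix j assume "j \<in> R" then show "exec_pre Nd p F a s m j = exec_pre Nd p' F' a' s m j"
  proof (induction j rule: less_induct)
    case (less j)
    have jm: "j < m" using less R by auto
    have nd: "Nd j \<subseteq> {..<j}" using dag jm by auto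
    consider "j \<in> F \<and> j \<in> F' \<and> a j = a' j"
      | "j \<notin> F \<and> j \<notin> F' \<and> Nd j \<subseteq> R \<and> (\<forall>d\<in>PiE (Nd j) A. p j s d = p' j s d)"
      | "exec_pre Nd p F a s m j = exec_pre Nd p' F' a' s m j" using H less by blast
    then show ?case
    proof cases
      case 1 then show ?thesis using jm exec_pre_fixed by metis
    next
      case 2
      have eq: "restrict (exec_pre Nd p F a s m) (Nd j) = restrict (exec_pre Nd p' F' a' s m) (Nd j)"
      proof
        fix x show "restrict (exec_pre Nd p F a s m) (Nd j) x = restrict (exec_pre Nd p' F' a' s m) (Nd j) x"
          using less 2 nd by (auto simp: restrict_def)
      qed
      have "restrict (exec_pre Nd p F a s m) (Nd j) \<in> PiE (Nd j) A"
        unfolding restrict_PiE_iff using tp 2 by auto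
      then show ?thesis using exec_pre_free[of j m F Nd p a s] exec_pre_free[of j m F' Nd p' a' s] jm nd 2 eq
        by auto
    next
      case 3 then show ?thesis .
    qed
  qed
qed




locale mdp =
  fixes n :: nat and A :: "nat \<Rightarrow> 'a set"
    and P :: "'s::finite \<Rightarrow> (nat \<Rightarrow> 'a) \<Rightarrow> 's \<Rightarrow> real"
    and r :: "'s \<Rightarrow> (nat \<Rightarrow> 'a) \<Rightarrow> real" and \<gamma> :: real
  assumes P_nonneg: "\<forall>s. \<forall>a\<in>jactions n A. \<forall>s'. P s a s' \<ge> 0"
    and P_sum: "\<forall>s. \<forall>a\<in>jactions n A. (\<Sum>s'\<in>UNIV. P s a s') = 1"
    and g0: "0 \<le> \<gamma>" and g1: "\<gamma> < 1"
begin

definition "Mset = {mu. \<forall>s. mu s \<in> jactions n A}"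

lemma stepdist_nonneg: "mu \<in> Mset \<Longrightarrow> stepdist P mu t s s' \<ge> 0"
  by (induction t arbitrary: s') (auto simp: Mset_def P_nonneg intro!: sum_nonneg mult_nonneg_nonneg)

lemma stepdist_sum: "mu \<in> Mset \<Longrightarrow> (\<Sum>s'\<in>UNIV. stepdist P mu t s s') = 1"
proof (induction t)
  case 0 then show ?case by simp
next
  case (Suc t)
  have "(\<Sum>s'\<in>UNIV. stepdist P mu (Suc t) s s') = (\<Sum>u\<in>UNIV. stepdist P mu t s u * (\<Sum>s'\<in>UNIV. P u (mu u) s'))"
    by (simp add: sum_distrib_left) (rule sum.swap)
  also have "\<dots> = (\<Sum>u\<in>UNIV. stepdist P mu t s u)" using Suc.prems P_sum by (simp add: Mset_def)
  finally show ?case using Suc by simp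
qed

lemma stepdist_le1: "mu \<in> Mset \<Longrightarrow> stepdist P mu t s s' \<le> 1"
proof -
  assume m: "mu \<in> Mset"
  have "stepdist P mu t s s' \<le> (\<Sum>s'\<in>UNIV. stepdist P mu t s s')"
    by (rule member_le_sum) (auto simp: stepdist_nonneg[OF m])
  then show ?thesis using stepdist_sum[OF m] by simp
qed

lemma delta1: "(\<Sum>u\<in>UNIV. (if u = (s::'t::finite) then 1 else 0) * (f u::real)) = f s"
proof -
  have "(\<Sum>u\<in>UNIV. (if u = s then 1 else 0) * (f u::real)) = (\<Sum>u\<in>UNIV. if u = s then f u else 0)"
    by (rule sum.cong) auto
  then show ?thesis by simp
qed

lemma delta2: "(\<Sum>u\<in>UNIV. (f u::real) * (if (s::'t::finite) = u then 1 else 0)) = f s"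
proof -
  have "(\<Sum>u\<in>UNIV. (f u::real) * (if s = u then 1 else 0)) = (\<Sum>u\<in>UNIV. if s = u then f u else 0)"
    by (rule sum.cong) auto
  then show ?thesis by simp
qed

lemma stepdist_back: "stepdist P mu (Suc t) s s' = (\<Sum>u\<in>UNIV. P s (mu s) u * stepdist P mu t u s')"
proof (induction t arbitrary: s')
  case 0 then show ?case by (simp add: delta1 delta2)
next
  case (Suc t)
  have "stepdist P mu (Suc (Suc t)) s s' = (\<Sum>u\<in>UNIV. (\<Sum>w\<in>UNIV. P s (mu s) w * stepdist P mu t w u) * P u (mu u) s')"
    using Suc by simp
  also have "\<dots> = (\<Sum>w\<in>UNIV. P s (mu s) w * (\<Sum>u\<in>UNIV. stepdist P mu t w u * P u (mu u) s'))"
    by (simp add: sum_distrib_left sum_distrib_right mult.assoc) (rule sum.swap)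
  finally show ?case by simp
qed

definition "Rw mu t s = (\<Sum>u\<in>UNIV. stepdist P mu t s u * r u (mu u))"

lemma Rw_0: "Rw mu 0 s = r s (mu s)"
  by (simp add: Rw_def delta1)

lemma Rw_Suc: "Rw mu (Suc t) s = (\<Sum>w\<in>UNIV. P s (mu s) w * Rw mu t w)"
  unfolding Rw_def stepdist_back
  by (simp add: sum_distrib_left sum_distrib_right mult.assoc) (rule sum.swap)

lemma Rw_bound: "mu \<in> Mset \<Longrightarrow> \<bar>Rw mu t s\<bar> \<le> (\<Sum>u\<in>UNIV. \<bar>r u (mu u)\<bar>)"
proof -
  assume m: "mu \<in> Mset"
  have "\<bar>Rw mu t s\<bar> \<le> (\<Sum>u\<in>UNIV. \<bar>stepdist P mu t s u * r u (mu u)\<bar>)"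
    unfolding Rw_def by (rule sum_abs)
  also have "\<dots> \<le> (\<Sum>u\<in>UNIV. \<bar>r u (mu u)\<bar>)"
  proof (rule sum_mono)
    fix u
    have "\<bar>stepdist P mu t s u * r u (mu u)\<bar> = stepdist P mu t s u * \<bar>r u (mu u)\<bar>"
      using stepdist_nonneg[OF m] by (simp add: abs_mult)
    also have "\<dots> \<le> 1 * \<bar>r u (mu u)\<bar>"
      by (rule mult_right_mono) (auto simp: stepdist_le1[OF m])
    finally show "\<bar>stepdist P mu t s u * r u (mu u)\<bar> \<le> \<bar>r u (mu u)\<bar>" by simp
  qed
  finally show ?thesis .
qed

lemma Rw_summable: "mu \<in> Mset \<Longrightarrow> summable (\<lambda>t. \<gamma> ^ t * Rw mu t s)"
proof -
  assume m: "mu \<in> Mset"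
  let ?B = "(\<Sum>u\<in>UNIV. \<bar>r u (mu u)\<bar>)"
  have sg: "summable (\<lambda>t. ?B * \<gamma> ^ t)" using g0 g1 by (intro summable_mult summable_geometric) auto
  have bnd: "\<forall>t. norm (\<gamma> ^ t * Rw mu t s) \<le> ?B * \<gamma> ^ t"
  proof
    fix t
    have "norm (\<gamma> ^ t * Rw mu t s) = \<gamma> ^ t * \<bar>Rw mu t s\<bar>" using g0 by (simp add: abs_mult)
    also have "\<dots> \<le> \<gamma> ^ t * ?B" by (rule mult_left_mono) (use Rw_bound[OF m] g0 in auto)
    finally show "norm (\<gamma> ^ t * Rw mu t s) \<le> ?B * \<gamma> ^ t" by (simp add: mult.commute)
  qed
  show ?thesis
  proof (rule summable_comparison_test)
    show "\<exists>N. \<forall>t\<ge>N. norm (\<gamma> ^ t * Rw mu t s) \<le> ?B * \<gamma> ^ t" using bnd by blast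
  qed (rule sg)
qed

lemma bellman:
  assumes m: "mu \<in> Mset"
  shows "Vpi P r \<gamma> mu s = r s (mu s) + \<gamma> * (\<Sum>s'\<in>UNIV. P s (mu s) s' * Vpi P r \<gamma> mu s')"
proof -
  have V: "Vpi P r \<gamma> mu x = (\<Sum>t. \<gamma> ^ t * Rw mu t x)" for x unfolding Vpi_def Rw_def by simp
  have "(\<Sum>t. \<gamma> ^ Suc t * Rw mu (Suc t) s) = (\<Sum>t. \<gamma> ^ t * Rw mu t s) - \<gamma> ^ 0 * Rw mu 0 s"
    by (rule suminf_split_head[OF Rw_summable[OF m]])
  moreover have "(\<Sum>t. \<gamma> ^ Suc t * Rw mu (Suc t) s) = (\<Sum>t. \<gamma> * (\<Sum>w\<in>UNIV. P s (mu s) w * (\<gamma> ^ t * Rw mu t w)))"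
    by (simp add: Rw_Suc sum_distrib_left mult_ac)
  moreover have "\<dots> = \<gamma> * (\<Sum>t. (\<Sum>w\<in>UNIV. P s (mu s) w * (\<gamma> ^ t * Rw mu t w)))"
    by (rule suminf_mult) (intro summable_sum summable_mult Rw_summable[OF m])
  moreover have "(\<Sum>t. (\<Sum>w\<in>UNIV. P s (mu s) w * (\<gamma> ^ t * Rw mu t w))) = (\<Sum>w\<in>UNIV. (\<Sum>t. P s (mu s) w * (\<gamma> ^ t * Rw mu t w)))"
    by (rule suminf_sum) (intro summable_mult Rw_summable[OF m])
  moreover have "\<And>w. (\<Sum>t. P s (mu s) w * (\<gamma> ^ t * Rw mu t w)) = P s (mu s) w * Vpi P r \<gamma> mu w"
    unfolding V by (rule suminf_mult) (rule Rw_summable[OF m])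
  ultimately show ?thesis unfolding V by (simp add: Rw_0)
qed

lemma contr:
  assumes m: "mu \<in> Mset" and d: "\<forall>s. d s \<le> \<gamma> * (\<Sum>s'\<in>UNIV. P s (mu s) s' * d s')"
  shows "d s \<le> 0"
proof -
  define M where "M = Max (range d)"
  have dM: "d x \<le> M" for x unfolding M_def by simp
  have "d x \<le> \<gamma> * M" for x
  proof -
    have "(\<Sum>s'\<in>UNIV. P x (mu x) s' * d s') \<le> (\<Sum>s'\<in>UNIV. P x (mu x) s' * M)"
      using m P_nonneg dM by (intro sum_mono mult_left_mono) (auto simp: Mset_def)
    also have "\<dots> = M" using m P_sum by (simp add: Mset_def sum_distrib_right[symmetric])
    finally show ?thesis using d g0 by (meson mult_left_mono order_trans)
  qed
  moreover have "M \<in> range d" unfolding M_def by (intro Max_in) auto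
  ultimately have "M \<le> \<gamma> * M" by auto
  then have "M \<le> 0"
  proof -
    assume Mg: "M \<le> \<gamma> * M"
    show "M \<le> 0"
    proof (rule ccontr)
      assume "\<not> M \<le> 0"
      then have "\<gamma> * M < 1 * M" using g1 by (intro mult_strict_right_mono) auto
      then show False using Mg by simp
    qed
  qed
  then show ?thesis using dM[of s] by simp
qed

lemma V_le:
  assumes m: "mu \<in> Mset" and W: "\<forall>s. r s (mu s) + \<gamma> * (\<Sum>s'\<in>UNIV. P s (mu s) s' * W s') \<le> W s"
  shows "Vpi P r \<gamma> mu s \<le> W s"
proof -
  have "\<forall>s. (\<lambda>x. Vpi P r \<gamma> mu x - W x) s \<le> \<gamma> * (\<Sum>s'\<in>UNIV. P s (mu s) s' * (\<lambda>x. Vpi P r \<gamma> mu x - W x) s')"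
  proof
    fix s
    have "Vpi P r \<gamma> mu s - W s \<le> \<gamma> * (\<Sum>s'\<in>UNIV. P s (mu s) s' * Vpi P r \<gamma> mu s') - \<gamma> * (\<Sum>s'\<in>UNIV. P s (mu s) s' * W s')"
      using bellman[OF m, of s] W[rule_format, of s] by linarith
    then show "(\<lambda>x. Vpi P r \<gamma> mu x - W x) s \<le> \<gamma> * (\<Sum>s'\<in>UNIV. P s (mu s) s' * (\<lambda>x. Vpi P r \<gamma> mu x - W x) s')"
      by (simp add: right_diff_distrib sum_subtractf)
  qed
  from contr[OF m this] show ?thesis by simp
qed

lemma V_ge:
  assumes m: "mu \<in> Mset" and W: "\<forall>s. W s \<le> r s (mu s) + \<gamma> * (\<Sum>s'\<in>UNIV. P s (mu s) s' * W s')"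
  shows "W s \<le> Vpi P r \<gamma> mu s"
proof -
  have "\<forall>s. (\<lambda>x. W x - Vpi P r \<gamma> mu x) s \<le> \<gamma> * (\<Sum>s'\<in>UNIV. P s (mu s) s' * (\<lambda>x. W x - Vpi P r \<gamma> mu x) s')"
  proof
    fix s
    have "W s - Vpi P r \<gamma> mu s \<le> \<gamma> * (\<Sum>s'\<in>UNIV. P s (mu s) s' * W s') - \<gamma> * (\<Sum>s'\<in>UNIV. P s (mu s) s' * Vpi P r \<gamma> mu s')"
      using bellman[OF m, of s] W[rule_format, of s] by linarith
    then show "(\<lambda>x. W x - Vpi P r \<gamma> mu x) s \<le> \<gamma> * (\<Sum>s'\<in>UNIV. P s (mu s) s' * (\<lambda>x. W x - Vpi P r \<gamma> mu x) s')"
      by (simp add: right_diff_distrib sum_subtractf)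
  qed
  from contr[OF m this] show ?thesis by simp
qed

end



lemma argmax_shift:
  assumes "\<forall>x\<in>S. f x = c1 + t x" "\<forall>x\<in>S. g x = c2 + t x"
  shows "argmax_set S f = argmax_set S g"
  using assms unfolding argmax_set_def by auto

locale setting = mdp n A P r \<gamma> for n A P r \<gamma> +
  fixes Nd :: "nat \<Rightarrow> nat set" and Ec :: "(nat \<times> nat) set"
    and pol
  assumes A_fin: "\<forall>i<n. finite (A i) \<and> A i \<noteq> {}"
    and DAG: "\<forall>i<n. Nd i \<subseteq> {..<i}"
    and alg: "is_admapi n A Nd P r \<gamma> pol"
    and single: "singleton_argmax n A Nd P r \<gamma> pol"
    and nbr: "\<forall>i<n. Nd i = NcS Ec {i..<n}"
    and ug: "undirected_graph n Ec"
begin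

lemma polA: "j < n \<Longrightarrow> d \<in> PiE (Nd j) A \<Longrightarrow> pol k j s d \<in> A j"
  using alg by (cases k) (auto simp: is_admapi_def argmax_set_def)

lemma mixA: "j < n \<Longrightarrow> d \<in> PiE (Nd j) A \<Longrightarrow> mixpol (pol k) (pol k') i j s d \<in> A j"
  unfolding mixpol_def using polA by auto

lemma exec_typed:
  assumes "\<forall>j<n. \<forall>d\<in>PiE (Nd j) A. q j s d \<in> A j" "\<forall>j<n. j \<in> F \<longrightarrow> a j \<in> A j"
  shows "exec Nd n q F a s \<in> jactions n A"
  unfolding exec_def jactions_def using assms DAG by (intro exec_pre_typed) auto

lemma jpol_typed: "jpol Nd n (pol k) s \<in> jactions n A"
  unfolding jpol_def using polA by (intro exec_typed) auto

lemma mu_M: "jpol Nd n (pol k) \<in> Mset"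
  unfolding Mset_def using jpol_typed by auto

lemma jact_A: "a \<in> jactions n A \<Longrightarrow> j < n \<Longrightarrow> a j \<in> A j"
  unfolding jactions_def by auto

lemma jact_ext: "a \<in> jactions n A \<Longrightarrow> a' \<in> jactions n A \<Longrightarrow> (\<forall>j<n. a j = a' j) \<Longrightarrow> a = a'"
  unfolding jactions_def by (rule PiE_ext) auto

lemma restr_typed: "a \<in> jactions n A \<Longrightarrow> i < n \<Longrightarrow> restrict a (Nd i) \<in> PiE (Nd i) A"
  unfolding restrict_PiE_iff using DAG jact_A by fastforce

lemma improve: "Vpi P r \<gamma> (jpol Nd n (pol k)) s \<le> Vpi P r \<gamma> (jpol Nd n (pol (Suc k))) s"
proof -
  let ?V = "Vpi P r \<gamma> (jpol Nd n (pol k))"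
  let ?Q = "QV P r \<gamma> ?V"
  have "\<forall>s. ?V s \<le> r s (jpol Nd n (pol (Suc k)) s) + \<gamma> * (\<Sum>s'\<in>UNIV. P s (jpol Nd n (pol (Suc k)) s) s' * ?V s')"
  proof
    fix s
    define q where "q i = mixpol (pol k) (pol (Suc k)) i" for i
    define aa where "aa i = jpol Nd n (q i) s" for i
    have qA: "\<forall>j<n. \<forall>d\<in>PiE (Nd j) A. q i j s d \<in> A j" for i unfolding q_def using mixA by auto
    have aaA: "aa i \<in> jactions n A" for i unfolding aa_def jpol_def using qA by (intro exec_typed) auto
    have step: "?Q s (aa i) \<le> ?Q s (aa (Suc i))" if i: "i < n" for i
    proof -
      define b where "b = restrict (aa i) (Nd i)"
      have bA: "b \<in> PiE (Nd i) A" unfolding b_def using restr_typed aaA i by auto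
      define h where "h x = exec Nd n (q i) (insert i (Nd i)) (b(i:=x)) s" for x
      have obj: "admapi_obj n Nd P r \<gamma> pol k i s b x = ?Q s (h x)" for x
        unfolding admapi_obj_def h_def q_def by simp
      have Ndi: "Nd i \<subseteq> {..<i}" using DAG i by auto
      have hA: "h x \<in> jactions n A" if "x \<in> A i" for x
        unfolding h_def using qA bA that Ndi by (intro exec_typed) auto
      have dagn: "\<forall>j<n. Nd j \<subseteq> {..<j}" using DAG by auto
      have x0A: "pol k i s b \<in> A i" using polA i bA by auto
      have x1A: "pol (Suc k) i s b \<in> A i" using polA i bA by auto
      have e1: "h (pol k i s b) = aa i"
      proof (rule jact_ext[OF hA[OF x0A] aaA])
        have "\<forall>j\<in>{..<n}. exec_pre Nd (q i) (insert i (Nd i)) (b(i:=pol k i s b)) s n j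
               = exec_pre Nd (q i) {} (\<lambda>_. undefined) s n j"
        proof (rule exec_loc[OF dagn, where A=A])
          show "\<forall>j\<in>{..<n}. exec_pre Nd (q i) (insert i (Nd i)) (b(i := pol k i s b)) s n j \<in> A j"
            using hA[OF x0A] unfolding h_def exec_def by (auto intro: jact_A)
          show "\<forall>j\<in>{..<n}. (j \<in> insert i (Nd i) \<and> j \<in> {} \<and> (b(i := pol k i s b)) j = undefined) \<or>
             (j \<notin> insert i (Nd i) \<and> j \<notin> {} \<and> Nd j \<subseteq> {..<n} \<and> (\<forall>d\<in>PiE (Nd j) A. q i j s d = q i j s d)) \<or>
             exec_pre Nd (q i) (insert i (Nd i)) (b(i := pol k i s b)) s n j = exec_pre Nd (q i) {} (\<lambda>_. undefined) s n j"
          proof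
            fix j assume j: "j \<in> {..<n}"
            show "(j \<in> insert i (Nd i) \<and> j \<in> {} \<and> (b(i := pol k i s b)) j = undefined) \<or>
             (j \<notin> insert i (Nd i) \<and> j \<notin> {} \<and> Nd j \<subseteq> {..<n} \<and> (\<forall>d\<in>PiE (Nd j) A. q i j s d = q i j s d)) \<or>
             exec_pre Nd (q i) (insert i (Nd i)) (b(i := pol k i s b)) s n j = exec_pre Nd (q i) {} (\<lambda>_. undefined) s n j"
            proof (cases "j \<in> insert i (Nd i)")
              case False
              moreover have "Nd j \<subseteq> {..<n}" using j DAG by fastforce
              ultimately show ?thesis by auto
            next
              case True
              have "exec_pre Nd (q i) (insert i (Nd i)) (b(i := pol k i s b)) s n j = (b(i := pol k i s b)) j"
                using True j by (intro exec_pre_fixed) auto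
              moreover have "exec_pre Nd (q i) {} (\<lambda>_. undefined) s n j = (b(i := pol k i s b)) j"
              proof (cases "j = i")
                case True
                have "exec_pre Nd (q i) {} (\<lambda>_. undefined) s n i = q i i s (restrict (exec_pre Nd (q i) {} (\<lambda>_. undefined) s n) (Nd i))"
                  using i Ndi by (intro exec_pre_free) auto
                then show ?thesis using True unfolding b_def aa_def jpol_def exec_def q_def mixpol_def by simp
              next
                case False
                then have "j \<in> Nd i" using True by auto
                then show ?thesis using False unfolding b_def aa_def jpol_def exec_def by simp
              qed
              ultimately show ?thesis by simp
            qed
          qed
        qed auto
        then show "\<forall>j<n. h (pol k i s b) j = aa i j" unfolding h_def aa_def jpol_def exec_def by auto
      qed
      have agree: "\<forall>j\<in>{..<i}. exec_pre Nd (q i) {} (\<lambda>_. undefined) s n j = exec_pre Nd (q (Suc i)) {} (\<lambda>_. undefined) s n j"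
      proof (rule exec_loc[OF dagn, where A=A])
        show "\<forall>j\<in>{..<i}. exec_pre Nd (q i) {} (\<lambda>_. undefined) s n j \<in> A j"
          using aaA i unfolding aa_def jpol_def exec_def by (auto intro: jact_A)
        show "\<forall>j\<in>{..<i}. (j \<in> {} \<and> j \<in> {} \<and> undefined = undefined) \<or>
          (j \<notin> {} \<and> j \<notin> {} \<and> Nd j \<subseteq> {..<i} \<and> (\<forall>d\<in>PiE (Nd j) A. q i j s d = q (Suc i) j s d)) \<or>
          exec_pre Nd (q i) {} (\<lambda>_. undefined) s n j = exec_pre Nd (q (Suc i)) {} (\<lambda>_. undefined) s n j"
        proof (intro ballI disjI2[OF disjI1] conjI)
          fix j assume j: "j \<in> {..<i}"
          show "j \<notin> {}" by simp
          show "j \<notin> {}" by simp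
          have "Nd j \<subseteq> {..<j}" using DAG i j by auto
          then show "Nd j \<subseteq> {..<i}" using j by auto
          show "q i j s d = q (Suc i) j s d" if "d \<in> PiE (Nd j) A" for d using j unfolding q_def mixpol_def by simp
        qed
      qed (use i in auto)
      have e2: "h (pol (Suc k) i s b) = aa (Suc i)"
      proof (rule jact_ext[OF hA[OF x1A] aaA])
        have "\<forall>j\<in>{..<n}. exec_pre Nd (q i) (insert i (Nd i)) (b(i:=pol (Suc k) i s b)) s n j
               = exec_pre Nd (q (Suc i)) {} (\<lambda>_. undefined) s n j"
        proof (rule exec_loc[OF dagn, where A=A])
          show "\<forall>j\<in>{..<n}. exec_pre Nd (q i) (insert i (Nd i)) (b(i := pol (Suc k) i s b)) s n j \<in> A j"
            using hA[OF x1A] unfolding h_def exec_def by (auto intro: jact_A)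
          show "\<forall>j\<in>{..<n}. (j \<in> insert i (Nd i) \<and> j \<in> {} \<and> (b(i := pol (Suc k) i s b)) j = undefined) \<or>
             (j \<notin> insert i (Nd i) \<and> j \<notin> {} \<and> Nd j \<subseteq> {..<n} \<and> (\<forall>d\<in>PiE (Nd j) A. q i j s d = q (Suc i) j s d)) \<or>
             exec_pre Nd (q i) (insert i (Nd i)) (b(i := pol (Suc k) i s b)) s n j = exec_pre Nd (q (Suc i)) {} (\<lambda>_. undefined) s n j"
          proof
            fix j assume j: "j \<in> {..<n}"
            show "(j \<in> insert i (Nd i) \<and> j \<in> {} \<and> (b(i := pol (Suc k) i s b)) j = undefined) \<or>
             (j \<notin> insert i (Nd i) \<and> j \<notin> {} \<and> Nd j \<subseteq> {..<n} \<and> (\<forall>d\<in>PiE (Nd j) A. q i j s d = q (Suc i) j s d)) \<or>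
             exec_pre Nd (q i) (insert i (Nd i)) (b(i := pol (Suc k) i s b)) s n j = exec_pre Nd (q (Suc i)) {} (\<lambda>_. undefined) s n j"
            proof (cases "j \<in> insert i (Nd i)")
              case False
              moreover have "Nd j \<subseteq> {..<n}" using j DAG by fastforce
              ultimately show ?thesis unfolding q_def mixpol_def by auto
            next
              case True
              have "exec_pre Nd (q i) (insert i (Nd i)) (b(i := pol (Suc k) i s b)) s n j = (b(i := pol (Suc k) i s b)) j"
                using True j by (intro exec_pre_fixed) auto
              moreover have "exec_pre Nd (q (Suc i)) {} (\<lambda>_. undefined) s n j = (b(i := pol (Suc k) i s b)) j"
              proof (cases "j = i")
                case True
                have "exec_pre Nd (q (Suc i)) {} (\<lambda>_. undefined) s n i = q (Suc i) i s (restrict (exec_pre Nd (q (Suc i)) {} (\<lambda>_. undefined) s n) (Nd i))"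
                  using i Ndi by (intro exec_pre_free) auto
                moreover have "restrict (exec_pre Nd (q (Suc i)) {} (\<lambda>_. undefined) s n) (Nd i) = b"
                  unfolding b_def aa_def jpol_def exec_def using agree Ndi by (intro ext) (auto simp: restrict_def)
                ultimately show ?thesis using True unfolding q_def mixpol_def by simp
              next
                case False
                then have "j \<in> Nd i" using True by auto
                then show ?thesis using False agree Ndi unfolding b_def aa_def jpol_def exec_def by auto
              qed
              ultimately show ?thesis by simp
            qed
          qed
        qed auto
        then show "\<forall>j<n. h (pol (Suc k) i s b) j = aa (Suc i) j" unfolding h_def aa_def jpol_def exec_def by auto
      qed
      have "pol (Suc k) i s b \<in> argmax_set (A i) (admapi_obj n Nd P r \<gamma> pol k i s b)"
        using alg i bA unfolding is_admapi_def by auto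
      then have "admapi_obj n Nd P r \<gamma> pol k i s b (pol k i s b) \<le> admapi_obj n Nd P r \<gamma> pol k i s b (pol (Suc k) i s b)"
        using x0A unfolding argmax_set_def by auto
      then show ?thesis unfolding obj e1 e2 .
    qed
    have chain: "?Q s (aa 0) \<le> ?Q s (aa m)" if "m \<le> n" for m
      using that
    proof (induction m)
      case 0 then show ?case by simp
    next
      case (Suc m) then show ?case using step[of m] by simp
    qed
    have a0: "aa 0 = jpol Nd n (pol k) s"
    proof -
      have "q 0 = pol k" unfolding q_def mixpol_def by auto
      then show ?thesis unfolding aa_def by simp
    qed
    have qn: "\<forall>j<n. q n j = pol (Suc k) j" unfolding q_def mixpol_def by simp
    have an: "aa n = jpol Nd n (pol (Suc k)) s"
      unfolding aa_def jpol_def exec_def using exec_pre_cong[OF qn] by blast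
    have "?V s = ?Q s (aa 0)" unfolding a0 QV_def by (rule bellman[OF mu_M])
    also have "\<dots> \<le> ?Q s (aa n)" using chain by simp
    finally show "?V s \<le> r s (jpol Nd n (pol (Suc k)) s) + \<gamma> * (\<Sum>s'\<in>UNIV. P s (jpol Nd n (pol (Suc k)) s) s' * ?V s')"
      unfolding an QV_def .
  qed
  then show ?thesis by (rule V_ge[OF mu_M])
qed

end



context setting begin

lemma finite_jact: "finite (jactions n A)"
  unfolding jactions_def using A_fin by (intro finite_PiE) auto

lemma finite_M: "finite (Mset :: ('t::finite \<Rightarrow> _) set)"
proof -
  have e: "Mset = PiE UNIV (\<lambda>_. jactions n A)" unfolding Mset_def PiE_UNIV_domain Pi_def by auto
  show ?thesis unfolding e by (rule finite_PiE) (auto simp: finite_jact)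
qed

lemma V_mono: "k \<le> k' \<Longrightarrow> Vpi P r \<gamma> (jpol Nd n (pol k)) s \<le> Vpi P r \<gamma> (jpol Nd n (pol k')) s"
  by (rule lift_Suc_mono_le[of "\<lambda>k. Vpi P r \<gamma> (jpol Nd n (pol k)) s"]) (auto intro: improve)

lemma ev_const: "\<exists>K0. \<forall>k\<ge>K0. Vpi P r \<gamma> (jpol Nd n (pol k)) = Vpi P r \<gamma> (jpol Nd n (pol K0))"
proof -
  define S where "S k = (\<Sum>s\<in>UNIV. Vpi P r \<gamma> (jpol Nd n (pol k)) s)" for k
  have "range S \<subseteq> (\<lambda>mu. \<Sum>s\<in>UNIV. Vpi P r \<gamma> mu s) ` Mset"
    unfolding S_def using mu_M by auto
  then have fin: "finite (range S)" using finite_M finite_subset by blast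
  define m where "m = Max (range S)"
  have "m \<in> range S" unfolding m_def using fin by (intro Max_in) auto
  then obtain K0 where K0: "S K0 = m" by auto
  have le: "S k \<le> m" for k unfolding m_def using fin by simp
  show ?thesis
  proof (intro exI allI impI)
    fix k assume k: "K0 \<le> k"
    show "Vpi P r \<gamma> (jpol Nd n (pol k)) = Vpi P r \<gamma> (jpol Nd n (pol K0))"
    proof (rule ccontr)
      assume ne: "Vpi P r \<gamma> (jpol Nd n (pol k)) \<noteq> Vpi P r \<gamma> (jpol Nd n (pol K0))"
      then obtain s0 where "Vpi P r \<gamma> (jpol Nd n (pol k)) s0 \<noteq> Vpi P r \<gamma> (jpol Nd n (pol K0)) s0" by auto
      then have "Vpi P r \<gamma> (jpol Nd n (pol K0)) s0 < Vpi P r \<gamma> (jpol Nd n (pol k)) s0"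
        using V_mono[OF k, of s0] by auto
      then have "S K0 < S k" unfolding S_def
        by (intro sum_strict_mono_ex1) (auto intro: V_mono[OF k])
      then show False using K0 le[of k] by simp
    qed
  qed
qed

end




lemma sum_split_pred: "finite X \<Longrightarrow> sum f X = sum f {x\<in>X. p x} + sum f {x\<in>X. \<not> p x}"
proof -
  assume fX: "finite X"
  have "X = {x\<in>X. p x} \<union> {x\<in>X. \<not> p x}" by auto
  then have "sum f X = sum f ({x\<in>X. p x} \<union> {x\<in>X. \<not> p x})" by simp
  also have "\<dots> = sum f {x\<in>X. p x} + sum f {x\<in>X. \<not> p x}" using fX by (intro sum.union_disjoint) auto
  finally show ?thesis .
qed

locale stable = setting n A P r \<gamma> Nd Ec pol for n A P r \<gamma> Nd Ec pol +
  fixes K0 :: nat and Q1 Q2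
  assumes K0pos: "1 \<le> K0"
    and Vc: "\<forall>k\<ge>K0. Vpi P r \<gamma> (jpol Nd n (pol k)) = Vpi P r \<gamma> (jpol Nd n (pol K0))"
    and cg: "\<forall>s. \<forall>a\<in>jactions n A. QV P r \<gamma> (Vpi P r \<gamma> (jpol Nd n (pol K0))) s a =
          (\<Sum>i<n. Q1 i s (a i)) + (\<Sum>(i, j)\<in>{e\<in>Ec. fst e < snd e}. Q2 i j s (a i) (a j))"
begin

definition "Ed = {e\<in>Ec. fst e < snd e}"
definition "Tl s i a = (\<Sum>j\<in>{i..<n}. Q1 j s (a j)) + (\<Sum>(j, l)\<in>{e\<in>Ed. i \<le> snd e}. Q2 j l s (a j) (a l))"
definition "Hd s i a = (\<Sum>j\<in>{..<i}. Q1 j s (a j)) + (\<Sum>(j, l)\<in>{e\<in>Ed. snd e < i}. Q2 j l s (a j) (a l))"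
definition "Lc s i a = Q1 i s (a i) + (\<Sum>(j, l)\<in>{e\<in>Ed. snd e = i}. Q2 j l s (a j) (a l))"

lemma Ec_sub: "Ec \<subseteq> {..<n} \<times> {..<n}" and symEc: "sym Ec"
  using ug unfolding undirected_graph_def by auto

lemma fin_Ed: "finite Ed"
proof -
  have "Ed \<subseteq> {..<n} \<times> {..<n}" unfolding Ed_def using Ec_sub by auto
  then show ?thesis by (rule finite_subset) auto
qed

lemma Ed_lt: "e \<in> Ed \<Longrightarrow> fst e < snd e \<and> snd e < n"
  unfolding Ed_def using Ec_sub by auto

lemma T1:
  assumes a: "a \<in> jactions n A" and i: "i \<le> n"
  shows "QV P r \<gamma> (Vpi P r \<gamma> (jpol Nd n (pol K0))) s a = Hd s i a + Tl s i a"
proof -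
  have "(\<Sum>j<n. Q1 j s (a j)) = (\<Sum>j\<in>{x\<in>{..<n}. x < i}. Q1 j s (a j)) + (\<Sum>j\<in>{x\<in>{..<n}. \<not> x < i}. Q1 j s (a j))"
    by (rule sum_split_pred) auto
  moreover have "{x\<in>{..<n}. x < i} = {..<i}" using i by auto
  moreover have "{x\<in>{..<n}. \<not> x < i} = {i..<n}" by auto
  ultimately have 1: "(\<Sum>j<n. Q1 j s (a j)) = (\<Sum>j\<in>{..<i}. Q1 j s (a j)) + (\<Sum>j\<in>{i..<n}. Q1 j s (a j))" by simp
  have "(\<Sum>(j, l)\<in>Ed. Q2 j l s (a j) (a l)) = (\<Sum>(j, l)\<in>{e\<in>Ed. snd e < i}. Q2 j l s (a j) (a l)) + (\<Sum>(j, l)\<in>{e\<in>Ed. \<not> snd e < i}. Q2 j l s (a j) (a l))"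
    by (rule sum_split_pred[OF fin_Ed])
  moreover have "{e\<in>Ed. \<not> snd e < i} = {e\<in>Ed. i \<le> snd e}" by auto
  ultimately have 2: "(\<Sum>(j, l)\<in>Ed. Q2 j l s (a j) (a l)) = (\<Sum>(j, l)\<in>{e\<in>Ed. snd e < i}. Q2 j l s (a j) (a l)) + (\<Sum>(j, l)\<in>{e\<in>Ed. i \<le> snd e}. Q2 j l s (a j) (a l))"
    by simp
  show ?thesis using cg a 1 2 unfolding Hd_def Tl_def Ed_def by simp
qed

lemma Hd0: "Hd s 0 a = 0"
  unfolding Hd_def by simp

lemma Tln: "Tl s n a = 0"
proof -
  have e: "{e\<in>Ed. n \<le> snd e} = {}" using Ed_lt by fastforce
  show ?thesis unfolding Tl_def e by simp
qed

lemma T2: "(\<forall>j<i. a j = a' j) \<Longrightarrow> Hd s i a = Hd s i a'"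
  unfolding Hd_def using Ed_lt by (fastforce intro!: sum.cong arg_cong2[where f="(+)"] split: prod.splits)

lemma T5: "(\<forall>j\<le>i. a j = a' j) \<Longrightarrow> Lc s i a = Lc s i a'"
  unfolding Lc_def using Ed_lt by (fastforce intro!: sum.cong arg_cong2[where f="(+)"] split: prod.splits)

lemma edge_in:
  assumes e: "(j, l) \<in> Ed" and il: "i \<le> l" and i: "i < n"
  shows "j \<in> Nd i \<union> {i..<n} \<and> l \<in> {i..<n}"
proof -
  have jl: "j < l" "l < n" using Ed_lt[OF e] by auto
  have lj: "(l, j) \<in> Ec" using e symEc unfolding Ed_def by (auto dest: symD)
  show ?thesis
  proof (cases "i \<le> j")
    case True then show ?thesis using jl il by auto
  next
    case False
    then have "j \<in> NcS Ec {i..<n}" unfolding NcS_def Nc_def using lj il jl by auto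
    then show ?thesis using nbr i jl il by auto
  qed
qed

lemma T3:
  assumes i: "i < n" and ag: "\<forall>j\<in>Nd i \<union> {i..<n}. a j = a' j"
  shows "Tl s i a = Tl s i a'"
proof -
  have 1: "(\<Sum>j\<in>{i..<n}. Q1 j s (a j)) = (\<Sum>j\<in>{i..<n}. Q1 j s (a' j))"
    using ag by (intro sum.cong) auto
  have 2: "(\<Sum>(j, l)\<in>{e\<in>Ed. i \<le> snd e}. Q2 j l s (a j) (a l)) = (\<Sum>(j, l)\<in>{e\<in>Ed. i \<le> snd e}. Q2 j l s (a' j) (a' l))"
  proof (rule sum.cong[OF refl])
    fix e assume "e \<in> {e\<in>Ed. i \<le> snd e}"
    moreover obtain j l where "e = (j, l)" by fastforce
    ultimately show "(case e of (j, l) \<Rightarrow> Q2 j l s (a j) (a l)) = (case e of (j, l) \<Rightarrow> Q2 j l s (a' j) (a' l))"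
      using edge_in[of j l i] i ag by auto
  qed
  show ?thesis unfolding Tl_def 1 2 ..
qed

lemma T4:
  assumes i: "i < n"
  shows "Tl s i a = Lc s i a + Tl s (Suc i) a"
proof -
  have 1: "(\<Sum>j\<in>{i..<n}. Q1 j s (a j)) = Q1 i s (a i) + (\<Sum>j\<in>{Suc i..<n}. Q1 j s (a j))"
    using i by (rule sum.atLeast_Suc_lessThan)
  have fin: "finite {e\<in>Ed. i \<le> snd e}" using fin_Ed by simp
  have "(\<Sum>(j, l)\<in>{e\<in>Ed. i \<le> snd e}. Q2 j l s (a j) (a l)) =
     (\<Sum>(j, l)\<in>{x\<in>{e\<in>Ed. i \<le> snd e}. snd x = i}. Q2 j l s (a j) (a l)) + (\<Sum>(j, l)\<in>{x\<in>{e\<in>Ed. i \<le> snd e}. \<not> snd x = i}. Q2 j l s (a j) (a l))"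
    by (rule sum_split_pred[OF fin])
  moreover have "{x\<in>{e\<in>Ed. i \<le> snd e}. snd x = i} = {e\<in>Ed. snd e = i}" by auto
  moreover have "{x\<in>{e\<in>Ed. i \<le> snd e}. \<not> snd x = i} = {e\<in>Ed. Suc i \<le> snd e}" by auto
  ultimately have 2: "(\<Sum>(j, l)\<in>{e\<in>Ed. i \<le> snd e}. Q2 j l s (a j) (a l)) =
     (\<Sum>(j, l)\<in>{e\<in>Ed. snd e = i}. Q2 j l s (a j) (a l)) + (\<Sum>(j, l)\<in>{e\<in>Ed. Suc i \<le> snd e}. Q2 j l s (a j) (a l))"
    by simp
  show ?thesis unfolding Tl_def Lc_def 1 2 by simp
qed

lemma clos:
  assumes ij: "i < j" and j: "j < n"
  shows "Nd j \<subseteq> Nd i \<union> {i..<n}"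
proof
  fix x assume x: "x \<in> Nd j"
  then obtain m where m: "m \<in> {j..<n}" "(m, x) \<in> Ec" "x \<notin> {j..<n}"
    using nbr j unfolding NcS_def Nc_def by auto
  have xn: "x < n" using m Ec_sub by auto
  show "x \<in> Nd i \<union> {i..<n}"
  proof (cases "i \<le> x")
    case True then show ?thesis using xn by auto
  next
    case False
    then have "x \<in> NcS Ec {i..<n}" unfolding NcS_def Nc_def using m ij by auto
    then show ?thesis using nbr ij j by auto
  qed
qed

definition "hx k i s b x = exec Nd n (mixpol (pol k) (pol (Suc k)) i) (insert i (Nd i)) (b(i:=x)) s"

lemma hx_typed:
  assumes "i < n" "b \<in> PiE (Nd i) A" "x \<in> A i"
  shows "hx k i s b x \<in> jactions n A"
  unfolding hx_def using assms mixA DAG by (intro exec_typed) auto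

lemma obj_decomp:
  assumes k: "K0 \<le> k" and i: "i < n" and b: "b \<in> PiE (Nd i) A" and x: "x \<in> A i"
  shows "admapi_obj n Nd P r \<gamma> pol k i s b x = Hd s i (hx k i s b x) + Tl s i (hx k i s b x)"
proof -
  have v: "Vpi P r \<gamma> (jpol Nd n (pol k)) = Vpi P r \<gamma> (jpol Nd n (pol K0))" using Vc k by blast
  show ?thesis unfolding admapi_obj_def hx_def[symmetric] v using T1[OF hx_typed[OF i b x]] i by simp
qed

lemma head_indep:
  assumes i: "i < n" and b: "b \<in> PiE (Nd i) A" and x: "x \<in> A i" and x': "x' \<in> A i"
  shows "Hd s i (hx k i s b x) = Hd s i (hx k i s b x')"
proof (rule T2)
  have dagn: "\<forall>j<n. Nd j \<subseteq> {..<j}" using DAG by auto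
  have Ndi: "Nd i \<subseteq> {..<i}" using DAG i by auto
  have "\<forall>j\<in>{..<i}. exec_pre Nd (mixpol (pol k) (pol (Suc k)) i) (insert i (Nd i)) (b(i:=x)) s n j
     = exec_pre Nd (mixpol (pol k) (pol (Suc k)) i) (insert i (Nd i)) (b(i:=x')) s n j"
  proof (rule exec_loc[OF dagn, where A=A])
    show "{..<i} \<subseteq> {..<n}" using i by auto
    show "\<forall>j\<in>{..<i}. exec_pre Nd (mixpol (pol k) (pol (Suc k)) i) (insert i (Nd i)) (b(i := x)) s n j \<in> A j"
    proof
      fix j assume "j \<in> {..<i}"
      then have "j < n" using i by auto
      from jact_A[OF hx_typed[OF i b x] this, of k s]
      show "exec_pre Nd (mixpol (pol k) (pol (Suc k)) i) (insert i (Nd i)) (b(i := x)) s n j \<in> A j"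
        unfolding hx_def exec_def .
    qed
    show "\<forall>j\<in>{..<i}. (j \<in> insert i (Nd i) \<and> j \<in> insert i (Nd i) \<and> (b(i := x)) j = (b(i := x')) j) \<or>
         (j \<notin> insert i (Nd i) \<and> j \<notin> insert i (Nd i) \<and> Nd j \<subseteq> {..<i} \<and>
          (\<forall>d\<in>PiE (Nd j) A. mixpol (pol k) (pol (Suc k)) i j s d = mixpol (pol k) (pol (Suc k)) i j s d)) \<or>
         exec_pre Nd (mixpol (pol k) (pol (Suc k)) i) (insert i (Nd i)) (b(i := x)) s n j =
         exec_pre Nd (mixpol (pol k) (pol (Suc k)) i) (insert i (Nd i)) (b(i := x')) s n j"
    proof
      fix j assume j: "j \<in> {..<i}"
      have "Nd j \<subseteq> {..<j}" using DAG i j by auto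
      then have "Nd j \<subseteq> {..<i}" using j by auto
      then show "(j \<in> insert i (Nd i) \<and> j \<in> insert i (Nd i) \<and> (b(i := x)) j = (b(i := x')) j) \<or>
         (j \<notin> insert i (Nd i) \<and> j \<notin> insert i (Nd i) \<and> Nd j \<subseteq> {..<i} \<and>
          (\<forall>d\<in>PiE (Nd j) A. mixpol (pol k) (pol (Suc k)) i j s d = mixpol (pol k) (pol (Suc k)) i j s d)) \<or>
         exec_pre Nd (mixpol (pol k) (pol (Suc k)) i) (insert i (Nd i)) (b(i := x)) s n j =
         exec_pre Nd (mixpol (pol k) (pol (Suc k)) i) (insert i (Nd i)) (b(i := x')) s n j"
        using j by auto
    qed
  qed
  then show "\<forall>j<i. hx k i s b x j = hx k i s b x' j" unfolding hx_def exec_def by auto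
qed

lemma tail_dep:
  assumes i: "i < n" and b: "b \<in> PiE (Nd i) A" and x: "x \<in> A i"
    and same: "\<forall>j. i < j \<and> j < n \<longrightarrow> (\<forall>s. \<forall>d\<in>PiE (Nd j) A. pol k j s d = pol k' j s d)"
  shows "Tl s i (hx k i s b x) = Tl s i (hx k' i s b x)"
proof (rule T3[OF i])
  have dagn: "\<forall>j<n. Nd j \<subseteq> {..<j}" using DAG by auto
  have Ndi: "Nd i \<subseteq> {..<i}" using DAG i by auto
  have "\<forall>j\<in>Nd i \<union> {i..<n}. exec_pre Nd (mixpol (pol k) (pol (Suc k)) i) (insert i (Nd i)) (b(i:=x)) s n j
     = exec_pre Nd (mixpol (pol k') (pol (Suc k')) i) (insert i (Nd i)) (b(i:=x)) s n j"
  proof (rule exec_loc[OF dagn, where A=A])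
    show "Nd i \<union> {i..<n} \<subseteq> {..<n}" using i Ndi by auto
    show "\<forall>j\<in>Nd i \<union> {i..<n}. exec_pre Nd (mixpol (pol k) (pol (Suc k)) i) (insert i (Nd i)) (b(i := x)) s n j \<in> A j"
    proof
      fix j assume "j \<in> Nd i \<union> {i..<n}"
      then have "j < n" using i Ndi by auto
      from jact_A[OF hx_typed[OF i b x] this, of k s]
      show "exec_pre Nd (mixpol (pol k) (pol (Suc k)) i) (insert i (Nd i)) (b(i := x)) s n j \<in> A j"
        unfolding hx_def exec_def .
    qed
    show "\<forall>j\<in>Nd i \<union> {i..<n}. (j \<in> insert i (Nd i) \<and> j \<in> insert i (Nd i) \<and> (b(i := x)) j = (b(i := x)) j) \<or>
         (j \<notin> insert i (Nd i) \<and> j \<notin> insert i (Nd i) \<and> Nd j \<subseteq> Nd i \<union> {i..<n} \<and>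
          (\<forall>d\<in>PiE (Nd j) A. mixpol (pol k) (pol (Suc k)) i j s d = mixpol (pol k') (pol (Suc k')) i j s d)) \<or>
         exec_pre Nd (mixpol (pol k) (pol (Suc k)) i) (insert i (Nd i)) (b(i := x)) s n j =
         exec_pre Nd (mixpol (pol k') (pol (Suc k')) i) (insert i (Nd i)) (b(i := x)) s n j"
    proof
      fix j assume j: "j \<in> Nd i \<union> {i..<n}"
      show "(j \<in> insert i (Nd i) \<and> j \<in> insert i (Nd i) \<and> (b(i := x)) j = (b(i := x)) j) \<or>
         (j \<notin> insert i (Nd i) \<and> j \<notin> insert i (Nd i) \<and> Nd j \<subseteq> Nd i \<union> {i..<n} \<and>
          (\<forall>d\<in>PiE (Nd j) A. mixpol (pol k) (pol (Suc k)) i j s d = mixpol (pol k') (pol (Suc k')) i j s d)) \<or>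
         exec_pre Nd (mixpol (pol k) (pol (Suc k)) i) (insert i (Nd i)) (b(i := x)) s n j =
         exec_pre Nd (mixpol (pol k') (pol (Suc k')) i) (insert i (Nd i)) (b(i := x)) s n j"
      proof (cases "j \<in> insert i (Nd i)")
        case True then show ?thesis by simp
      next
        case False
        then have ij: "i < j" "j < n" using j by auto
        then have "Nd j \<subseteq> Nd i \<union> {i..<n}" by (rule clos)
        moreover have "\<forall>d\<in>PiE (Nd j) A. mixpol (pol k) (pol (Suc k)) i j s d = mixpol (pol k') (pol (Suc k')) i j s d"
          using same ij unfolding mixpol_def by auto
        ultimately show ?thesis using False by simp
      qed
    qed
  qed
  then show "\<forall>j\<in>Nd i \<union> {i..<n}. hx k i s b x j = hx k' i s b x j" unfolding hx_def exec_def .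
qed

end



context stable begin

lemma stab:
  "i < n \<Longrightarrow> K0 + (n - i) \<le> k \<Longrightarrow> K0 + (n - i) \<le> k' \<Longrightarrow> d \<in> PiE (Nd i) A \<Longrightarrow> pol k i s d = pol k' i s d"
proof (induction "n - i" arbitrary: i k k' s d rule: less_induct)
  case less
  have i: "i < n" and d: "d \<in> PiE (Nd i) A" using less.prems by auto
  obtain k0 where k0: "k = Suc k0" using less.prems(1,2) by (cases k) auto
  obtain k0' where k0': "k' = Suc k0'" using less.prems(1,3) by (cases k') auto
  have k0ge: "K0 + (n - Suc i) \<le> k0" "K0 + (n - Suc i) \<le> k0'" using less.prems k0 k0' by auto
  have K0k0: "K0 \<le> k0" "K0 \<le> k0'" using k0ge by auto
  have same: "\<forall>j. i < j \<and> j < n \<longrightarrow> (\<forall>s. \<forall>d\<in>PiE (Nd j) A. pol k0 j s d = pol k0' j s d)"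
  proof (intro allI impI ballI)
    fix j s d assume j: "i < j \<and> j < n" and dj: "d \<in> PiE (Nd j) A"
    show "pol k0 j s d = pol k0' j s d"
      by (rule less.hyps[of j]) (use j k0ge dj in auto)
  qed
  obtain x0 where x0: "x0 \<in> A i" using A_fin i by auto
  let ?f = "admapi_obj n Nd P r \<gamma> pol k0 i s d"
  let ?g = "admapi_obj n Nd P r \<gamma> pol k0' i s d"
  have "argmax_set (A i) ?f = argmax_set (A i) ?g"
  proof (rule argmax_shift)
    show "\<forall>x\<in>A i. ?f x = Hd s i (hx k0 i s d x0) + Tl s i (hx k0 i s d x)"
    proof
      fix x assume x: "x \<in> A i"
      show "?f x = Hd s i (hx k0 i s d x0) + Tl s i (hx k0 i s d x)"
        using obj_decomp[OF K0k0(1) i d x] head_indep[OF i d x x0, where k=k0 and s=s] by simp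
    qed
    show "\<forall>x\<in>A i. ?g x = Hd s i (hx k0' i s d x0) + Tl s i (hx k0 i s d x)"
    proof
      fix x assume x: "x \<in> A i"
      show "?g x = Hd s i (hx k0' i s d x0) + Tl s i (hx k0 i s d x)"
        using obj_decomp[OF K0k0(2) i d x] head_indep[OF i d x x0, where k=k0' and s=s] tail_dep[OF i d x same, of s] by simp
    qed
  qed
  moreover obtain y where y: "argmax_set (A i) ?f = {y}"
    using single K0k0 K0pos i d unfolding singleton_argmax_def by (meson order_trans)
  moreover have "pol (Suc k0) i s d \<in> argmax_set (A i) ?f" using alg i d unfolding is_admapi_def by blast
  moreover have "pol (Suc k0') i s d \<in> argmax_set (A i) ?g" using alg i d unfolding is_admapi_def by blast
  ultimately have "pol (Suc k0) i s d \<in> {y}" "pol (Suc k0') i s d \<in> {y}" by auto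
  then show ?case using k0 k0' by simp
qed

lemma VE:
  assumes KK: "K0 \<le> K" and st: "\<forall>j<n. \<forall>s. \<forall>d\<in>PiE (Nd j) A. pol (Suc K) j s d = pol K j s d"
  shows "i \<le> n \<Longrightarrow> a \<in> jactions n A \<Longrightarrow> Tl s i a \<le> Tl s i (exec Nd n (pol K) {..<i} a s)"
proof (induction "n - i" arbitrary: i a)
  case 0
  then have "i = n" by auto
  then show ?case by (simp add: Tln)
next
  case (Suc dd)
  then have i: "i < n" by auto
  have aA: "a \<in> jactions n A" using Suc.prems by auto
  have IH: "Tl s (Suc i) a \<le> Tl s (Suc i) (exec Nd n (pol K) {..<Suc i} a s)"
    using Suc.hyps(1)[of "Suc i" a] Suc.hyps(2) aA i by auto
  define e where "e = exec Nd n (pol K) {..<i} a s"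
  define g where "g = exec Nd n (pol K) {..<Suc i} a s"
  define b where "b = restrict a (Nd i)"
  define x where "x = a i"
  define xs where "xs = pol (Suc K) i s b"
  have dagn: "\<forall>j<n. Nd j \<subseteq> {..<j}" using DAG by auto
  have Ndi: "Nd i \<subseteq> {..<i}" using DAG i by auto
  have bA: "b \<in> PiE (Nd i) A" unfolding b_def using restr_typed aA i by auto
  have xA: "x \<in> A i" unfolding x_def using jact_A aA i by auto
  have xsA: "xs \<in> A i" unfolding xs_def using polA i bA by auto
  have eA: "e \<in> jactions n A" unfolding e_def using polA jact_A[OF aA] by (intro exec_typed) auto
  have gA: "g \<in> jactions n A" unfolding g_def using polA jact_A[OF aA] by (intro exec_typed) auto
  have ga: "\<forall>j\<le>i. a j = g j" unfolding g_def exec_def using i by (auto intro: exec_pre_fixed[symmetric])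
  have ea: "\<forall>j<i. e j = a j" unfolding e_def exec_def using i by (auto intro: exec_pre_fixed)
  have s1: "Tl s i a = Lc s i a + Tl s (Suc i) a" by (rule T4[OF i])
  have s2: "Lc s i a = Lc s i g" using T5 ga by blast
  have s3: "Tl s i g = Lc s i g + Tl s (Suc i) g" by (rule T4[OF i])
  have s4: "Tl s i g = Tl s i (hx K i s b x)"
  proof (rule T3[OF i])
    have "\<forall>j\<in>Nd i \<union> {i..<n}. exec_pre Nd (pol K) {..<Suc i} a s n j
       = exec_pre Nd (mixpol (pol K) (pol (Suc K)) i) (insert i (Nd i)) (b(i:=x)) s n j"
    proof (rule exec_loc[OF dagn, where A=A])
      show "Nd i \<union> {i..<n} \<subseteq> {..<n}" using i Ndi by auto
      show "\<forall>j\<in>Nd i \<union> {i..<n}. exec_pre Nd (pol K) {..<Suc i} a s n j \<in> A j"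
      proof
        fix j assume "j \<in> Nd i \<union> {i..<n}"
        then have "j < n" using i Ndi by auto
        from jact_A[OF gA this] show "exec_pre Nd (pol K) {..<Suc i} a s n j \<in> A j"
          unfolding g_def exec_def .
      qed
      show "\<forall>j\<in>Nd i \<union> {i..<n}. (j \<in> {..<Suc i} \<and> j \<in> insert i (Nd i) \<and> a j = (b(i := x)) j) \<or>
         (j \<notin> {..<Suc i} \<and> j \<notin> insert i (Nd i) \<and> Nd j \<subseteq> Nd i \<union> {i..<n} \<and>
          (\<forall>d\<in>PiE (Nd j) A. pol K j s d = mixpol (pol K) (pol (Suc K)) i j s d)) \<or>
         exec_pre Nd (pol K) {..<Suc i} a s n j =
         exec_pre Nd (mixpol (pol K) (pol (Suc K)) i) (insert i (Nd i)) (b(i := x)) s n j"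
      proof
        fix j assume j: "j \<in> Nd i \<union> {i..<n}"
        show "(j \<in> {..<Suc i} \<and> j \<in> insert i (Nd i) \<and> a j = (b(i := x)) j) \<or>
         (j \<notin> {..<Suc i} \<and> j \<notin> insert i (Nd i) \<and> Nd j \<subseteq> Nd i \<union> {i..<n} \<and>
          (\<forall>d\<in>PiE (Nd j) A. pol K j s d = mixpol (pol K) (pol (Suc K)) i j s d)) \<or>
         exec_pre Nd (pol K) {..<Suc i} a s n j =
         exec_pre Nd (mixpol (pol K) (pol (Suc K)) i) (insert i (Nd i)) (b(i := x)) s n j"
        proof (cases "j \<in> insert i (Nd i)")
          case True
          then have "j \<in> {..<Suc i}" using Ndi by auto
          moreover have "a j = (b(i := x)) j" using True Ndi unfolding b_def x_def by auto
          ultimately show ?thesis using True by blast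
        next
          case False
          then have ij: "i < j" "j < n" using j by auto
          then have "Nd j \<subseteq> Nd i \<union> {i..<n}" by (rule clos)
          moreover have "\<forall>d\<in>PiE (Nd j) A. pol K j s d = mixpol (pol K) (pol (Suc K)) i j s d"
            using ij unfolding mixpol_def by auto
          moreover have "j \<notin> {..<Suc i}" using ij by auto
          ultimately show ?thesis using False by blast
        qed
      qed
    qed
    then show "\<forall>j\<in>Nd i \<union> {i..<n}. g j = hx K i s b x j" unfolding g_def hx_def exec_def .
  qed
  have s5: "Tl s i (hx K i s b x) \<le> Tl s i (hx K i s b xs)"
  proof -
    have "xs \<in> argmax_set (A i) (admapi_obj n Nd P r \<gamma> pol K i s b)"
      unfolding xs_def using alg i bA unfolding is_admapi_def by blast
    then have "admapi_obj n Nd P r \<gamma> pol K i s b x \<le> admapi_obj n Nd P r \<gamma> pol K i s b xs"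
      using xA unfolding argmax_set_def by auto
    then show ?thesis using obj_decomp[OF KK i bA xA, of s] obj_decomp[OF KK i bA xsA, of s]
        head_indep[OF i bA xA xsA, where k=K and s=s] by linarith
  qed
  have s6: "Tl s i (hx K i s b xs) = Tl s i e"
  proof (rule T3[OF i])
    have hA: "hx K i s b xs \<in> jactions n A" by (rule hx_typed[OF i bA xsA])
    have "\<forall>j\<in>Nd i \<union> {i..<n}. exec_pre Nd (mixpol (pol K) (pol (Suc K)) i) (insert i (Nd i)) (b(i:=xs)) s n j
        = exec_pre Nd (pol K) {..<i} a s n j"
    proof (rule exec_loc[OF dagn, where A=A])
      show "Nd i \<union> {i..<n} \<subseteq> {..<n}" using i Ndi by auto
      show "\<forall>j\<in>Nd i \<union> {i..<n}. exec_pre Nd (mixpol (pol K) (pol (Suc K)) i) (insert i (Nd i)) (b(i:=xs)) s n j \<in> A j"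
      proof
        fix j assume "j \<in> Nd i \<union> {i..<n}"
        then have "j < n" using i Ndi by auto
        from jact_A[OF hA this] show "exec_pre Nd (mixpol (pol K) (pol (Suc K)) i) (insert i (Nd i)) (b(i:=xs)) s n j \<in> A j"
          unfolding hx_def exec_def .
      qed
      show "\<forall>j\<in>Nd i \<union> {i..<n}. (j \<in> insert i (Nd i) \<and> j \<in> {..<i} \<and> (b(i := xs)) j = a j) \<or>
         (j \<notin> insert i (Nd i) \<and> j \<notin> {..<i} \<and> Nd j \<subseteq> Nd i \<union> {i..<n} \<and>
          (\<forall>d\<in>PiE (Nd j) A. mixpol (pol K) (pol (Suc K)) i j s d = pol K j s d)) \<or>
         exec_pre Nd (mixpol (pol K) (pol (Suc K)) i) (insert i (Nd i)) (b(i:=xs)) s n j =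
         exec_pre Nd (pol K) {..<i} a s n j"
      proof
        fix j assume j: "j \<in> Nd i \<union> {i..<n}"
        show "(j \<in> insert i (Nd i) \<and> j \<in> {..<i} \<and> (b(i := xs)) j = a j) \<or>
         (j \<notin> insert i (Nd i) \<and> j \<notin> {..<i} \<and> Nd j \<subseteq> Nd i \<union> {i..<n} \<and>
          (\<forall>d\<in>PiE (Nd j) A. mixpol (pol K) (pol (Suc K)) i j s d = pol K j s d)) \<or>
         exec_pre Nd (mixpol (pol K) (pol (Suc K)) i) (insert i (Nd i)) (b(i:=xs)) s n j =
         exec_pre Nd (pol K) {..<i} a s n j"
        proof (cases "j \<in> Nd i")
          case True
          then have "j \<in> {..<i}" using Ndi by auto
          moreover have "(b(i := xs)) j = a j" using True Ndi unfolding b_def by auto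
          ultimately show ?thesis using True by blast
        next
          case nj: False
          show ?thesis
          proof (cases "j = i")
            case True
            have h1: "exec_pre Nd (mixpol (pol K) (pol (Suc K)) i) (insert i (Nd i)) (b(i:=xs)) s n i = xs"
              using i by (subst exec_pre_fixed) auto
            have h2: "exec_pre Nd (pol K) {..<i} a s n i = pol K i s (restrict (exec_pre Nd (pol K) {..<i} a s n) (Nd i))"
              using i Ndi by (intro exec_pre_free) auto
            have h3: "restrict (exec_pre Nd (pol K) {..<i} a s n) (Nd i) = b"
            proof
              fix l show "restrict (exec_pre Nd (pol K) {..<i} a s n) (Nd i) l = b l"
                using ea Ndi unfolding b_def e_def exec_def by (auto simp: restrict_def)
            qed
            have h4: "xs = pol K i s b" unfolding xs_def using st i bA by auto
            show ?thesis using True h1 h2 h3 h4 by simp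
          next
            case False
            then have ij: "i < j" "j < n" using j nj by auto
            then have "Nd j \<subseteq> Nd i \<union> {i..<n}" by (rule clos)
            moreover have "\<forall>d\<in>PiE (Nd j) A. mixpol (pol K) (pol (Suc K)) i j s d = pol K j s d"
              using ij unfolding mixpol_def by auto
            moreover have "j \<notin> {..<i}" "j \<notin> insert i (Nd i)" using ij nj by auto
            ultimately show ?thesis by blast
          qed
        qed
      qed
    qed
    then show "\<forall>j\<in>Nd i \<union> {i..<n}. hx K i s b xs j = e j" unfolding e_def hx_def exec_def .
  qed
  show ?case using s1 IH s2 s3 s4 s5 s6 unfolding e_def[symmetric] g_def[symmetric] by linarith
qed

lemma opt:
  assumes KK: "K0 \<le> K" and st: "\<forall>j<n. \<forall>s. \<forall>d\<in>PiE (Nd j) A. pol (Suc K) j s d = pol K j s d"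
    and a: "a \<in> jactions n A"
  shows "QV P r \<gamma> (Vpi P r \<gamma> (jpol Nd n (pol K0))) s a \<le> QV P r \<gamma> (Vpi P r \<gamma> (jpol Nd n (pol K0))) s (jpol Nd n (pol K) s)"
proof -
  have "Tl s 0 a \<le> Tl s 0 (exec Nd n (pol K) {..<0} a s)" by (rule VE[OF KK st]) (use a in auto)
  moreover have "exec Nd n (pol K) {..<0} a s = jpol Nd n (pol K) s"
    unfolding jpol_def exec_def using exec_pre_empty by simp
  moreover have jt: "jpol Nd n (pol K) s \<in> jactions n A" by (rule jpol_typed)
  ultimately show ?thesis using T1[OF a, where i=0 and s=s] T1[OF jt, where i=0 and s=s] Hd0 by simp
qed

lemma final:
  "\<exists>K. (\<forall>k\<ge>K. \<forall>i<n. \<forall>s. \<forall>b\<in>PiE (Nd i) A. pol k i s b = pol K i s b)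
       \<and> (\<forall>s. Vpi P r \<gamma> (jpol Nd n (pol K)) s = Vstar n A P r \<gamma> s)"
proof (intro exI conjI allI impI ballI)
  fix k i s b assume "K0 + n \<le> k" "i < n" "b \<in> PiE (Nd i) A"
  then show "pol k i s b = pol (K0 + n) i s b" by (intro stab) auto
next
  fix s
  let ?K = "K0 + n"
  let ?W = "Vpi P r \<gamma> (jpol Nd n (pol ?K))"
  have st: "\<forall>j<n. \<forall>s. \<forall>d\<in>PiE (Nd j) A. pol (Suc ?K) j s d = pol ?K j s d"
    using stab by auto
  have v: "?W = Vpi P r \<gamma> (jpol Nd n (pol K0))" using Vc le_add1 by blast
  have ub: "Vpi P r \<gamma> mu s \<le> ?W s" if mu: "mu \<in> Mset" for mu
  proof (rule V_le[OF mu], rule allI)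
    fix s
    have "r s (mu s) + \<gamma> * (\<Sum>s'\<in>UNIV. P s (mu s) s' * ?W s') = QV P r \<gamma> ?W s (mu s)"
      unfolding QV_def ..
    also have "\<dots> \<le> QV P r \<gamma> ?W s (jpol Nd n (pol ?K) s)"
      unfolding v by (rule opt) (use st mu in \<open>auto simp: Mset_def\<close>)
    also have "\<dots> = ?W s" unfolding QV_def by (rule bellman[OF mu_M, symmetric])
    finally show "r s (mu s) + \<gamma> * (\<Sum>s'\<in>UNIV. P s (mu s) s' * ?W s') \<le> ?W s" .
  qed
  have "Sup ((\<lambda>mu. Vpi P r \<gamma> mu s) ` Mset) = ?W s"
    by (rule cSup_eq_maximum) (use ub mu_M in auto)
  then show "?W s = Vstar n A P r \<gamma> s" unfolding Vstar_def Mset_def by simp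
qed

end


theorem mainTheorem3:
  fixes n :: nat
    and A :: "nat \<Rightarrow> 'a set"
    and P :: "'s::finite \<Rightarrow> (nat \<Rightarrow> 'a) \<Rightarrow> 's \<Rightarrow> real"
    and r :: "'s \<Rightarrow> (nat \<Rightarrow> 'a) \<Rightarrow> real"
    and \<gamma> :: real
    and Nd :: "nat \<Rightarrow> nat set"
    and Ec :: "(nat \<times> nat) set"
    and pol :: "nat \<Rightarrow> nat \<Rightarrow> 's \<Rightarrow> (nat \<Rightarrow> 'a) \<Rightarrow> 'a"
  assumes A_fin: "\<forall>i<n. finite (A i) \<and> A i \<noteq> {}"
    and P_nonneg: "\<forall>s. \<forall>a\<in>jactions n A. \<forall>s'. P s a s' \<ge> 0"
    and P_sum: "\<forall>s. \<forall>a\<in>jactions n A. (\<Sum>s'\<in>UNIV. P s a s') = 1"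
    and gamma: "0 \<le> \<gamma>" "\<gamma> < 1"
    and DAG: "\<forall>i<n. Nd i \<subseteq> {..<i}"
    and alg: "is_admapi n A Nd P r \<gamma> pol"
    and single: "singleton_argmax n A Nd P r \<gamma> pol"
    and CG: "is_CG n A Ec
               (QV P r \<gamma> (\<lambda>s. lim (\<lambda>k. Vpi P r \<gamma> (jpol Nd n (pol k)) s)))"
    and nbr: "\<forall>i<n. Nd i = NcS Ec {i..<n}"
  shows "\<exists>K. (\<forall>k\<ge>K. \<forall>i<n. \<forall>s. \<forall>b\<in>PiE (Nd i) A. pol k i s b = pol K i s b)
             \<and> (\<forall>s. Vpi P r \<gamma> (jpol Nd n (pol K)) s = Vstar n A P r \<gamma> s)"
proof -
  interpret S: setting n A P r \<gamma> Nd Ec pol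
    using assms by unfold_locales (auto simp: is_CG_def)
  obtain K0 where K0: "\<forall>k\<ge>K0. Vpi P r \<gamma> (jpol Nd n (pol k)) = Vpi P r \<gamma> (jpol Nd n (pol K0))"
    using S.ev_const by blast
  have K1: "\<forall>k\<ge>Suc K0. Vpi P r \<gamma> (jpol Nd n (pol k)) = Vpi P r \<gamma> (jpol Nd n (pol (Suc K0)))"
  proof (intro allI impI)
    fix k assume "Suc K0 \<le> k"
    then have "K0 \<le> k" "K0 \<le> Suc K0" by auto
    then show "Vpi P r \<gamma> (jpol Nd n (pol k)) = Vpi P r \<gamma> (jpol Nd n (pol (Suc K0)))"
      using K0 by metis
  qed
  have lim: "(\<lambda>s. lim (\<lambda>k. Vpi P r \<gamma> (jpol Nd n (pol k)) s)) = Vpi P r \<gamma> (jpol Nd n (pol (Suc K0)))"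
  proof
    fix s
    have "(\<lambda>k. Vpi P r \<gamma> (jpol Nd n (pol k)) s) \<longlonglongrightarrow> Vpi P r \<gamma> (jpol Nd n (pol (Suc K0))) s"
    proof (rule tendsto_eventually)
      show "\<forall>\<^sub>F k in sequentially. Vpi P r \<gamma> (jpol Nd n (pol k)) s = Vpi P r \<gamma> (jpol Nd n (pol (Suc K0))) s"
        by (rule eventually_sequentiallyI[of "Suc K0"]) (use K1 in metis)
    qed
    then show "lim (\<lambda>k. Vpi P r \<gamma> (jpol Nd n (pol k)) s) = Vpi P r \<gamma> (jpol Nd n (pol (Suc K0))) s"
      by (rule limI)
  qed
  from CG obtain Q1 Q2 where cg: "\<forall>s. \<forall>a\<in>jactions n A. QV P r \<gamma> (Vpi P r \<gamma> (jpol Nd n (pol (Suc K0)))) s a =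
          (\<Sum>i<n. Q1 i s (a i)) + (\<Sum>(i, j)\<in>{e\<in>Ec. fst e < snd e}. Q2 i j s (a i) (a j))"
    unfolding is_CG_def lim by blast
  interpret T: stable n A P r \<gamma> Nd Ec pol "Suc K0" Q1 Q2
  proof unfold_locales
    show "1 \<le> Suc K0" by simp
  qed (fact K1, fact cg)
  show ?thesis by (rule T.final)
qed

end
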